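(* Let $\mathcal L_H:\mathbb R^{D_1\times\cdots\times D_N}\to\mathbb R_{\ge0}$ be differentiable and $\phi_H((W^{(\nu)})_{\nu\in\mathcal T}):=\mathcal L_H(\mathcal W_H)$ for a hierarchical tensor factorization with mode tree $\mathcal T$. Let $\nu\in\mathrm{int}(\mathcal T)$, $\nu_c\in C(\nu)$, and $r\in[R_\nu]$. If both $W^{(\nu)}_{r,:}=0$ and $W^{(\nu_c)}_{:,r}=0$, then $$\frac{\partial}{\partial W^{(\nu)}_{r,:}}\phi_H\big((W^{(\nu')})_{\nu'\in\mathcal T}\big)=0\quad\text{and}\quad\frac{\partial}{\partial W^{(\nu_c)}_{:,r}}\phi_H\big((W^{(\nu')})_{\nu'\in\mathcal T}\big)=0.$$
   Context: Fix $N\in\mathbb N$, $D_1,\dots,D_N\in\mathbb N$; $[K]:=\{1,\dots,K\}$; $\otimes$ the tensor product. A mode tree $\mathcal T$ over $[N]$ is a rooted tree whose nodes are labeled by subsets of $[N]$, with exactly $N$ leaves labeled $\{1\},\dots,\{N\}$, and where each interior node's label is the union of its children's labels; nodes are identified with labels, root $[N]$, $\mathrm{int}(\mathcal T)$ interior nodes, $Pa(\nu)$ parent, $C(\nu)$ children (fixed order). A hierarchical tensor factorization has $R_\nu\in\mathbb N$ ($\nu\in\mathrm{int}(\mathcal T)$), $R_{Pa([N])}:=1$, $R_{\{n\}}:=D_n$, weight matrices $W^{(\nu)}\in\mathbb R^{R_\nu\times R_{Pa(\nu)}}$. Intermediate tensors: $\mathcal W^{(\{n\},r)}:=W^{(\{n\})}_{:,r}$;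 for $\nu\in\mathrm{int}(\mathcal T)\setminus\{[N]\}$ (leaves to root), $r\in[R_{Pa(\nu)}]$: $\mathcal W^{(\nu,r)}:=\pi_\nu\big(\sum_{r'=1}^{R_\nu}W^{(\nu)}_{r',r}\bigotimes_{\nu_c\in C(\nu)}\mathcal W^{(\nu_c,r')}\big)$; end tensor $\mathcal W_H:=\pi_{[N]}\big(\sum_{r'=1}^{R_{[N]}}W^{([N])}_{r',1}\bigotimes_{\nu_c\in C([N])}\mathcal W^{(\nu_c,r')}\big)$, where $\pi_\nu$ permutes modes (ordered by children, each child's elements ascending) into ascending order of the elements of $\nu$. *)

theory Defs
  imports "HOL-Analysis.Analysis"
begin

datatype mtree = MLeaf nat | MNode "mtree list"

fun lab :: "mtree \<Rightarrow> nat set" where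
  "lab (MLeaf n) = {n}"
| "lab (MNode cs) = (\<Union>c\<in>set cs. lab c)"

fun leaves :: "mtree \<Rightarrow> nat list" where
  "leaves (MLeaf n) = [n]"
| "leaves (MNode cs) = concat (map leaves cs)"

fun subtrees :: "mtree \<Rightarrow> mtree set" where
  "subtrees (MLeaf n) = {MLeaf n}"
| "subtrees (MNode cs) = insert (MNode cs) (\<Union>c\<in>set cs. subtrees c)"

text \<open>Valid mode tree over [N]: the leaves are labelled exactly {1},...,{N} (each once), and
nodes are identified with their labels, i.e. no interior node has fewer than two children
(a unary node would carry the same label as its child, an empty node is not a valid leaf).\<close>

definition mode_tree :: "nat \<Rightarrow> mtree \<Rightarrow> bool" where
  "mode_tree N t \<longleftrightarrow> mset (leaves t) = mset [1..<N+1] \<and>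
     (\<forall>s\<in>subtrees t. \<forall>cs. s = MNode cs \<longrightarrow> 2 \<le> length cs)"

fun node_rank :: "(nat \<Rightarrow> nat) \<Rightarrow> (nat set \<Rightarrow> nat) \<Rightarrow> mtree \<Rightarrow> nat" where
  "node_rank D R (MLeaf n) = D n"
| "node_rank D R (MNode cs) = R (lab (MNode cs))"

definition parent_rank :: "mtree \<Rightarrow> (nat set \<Rightarrow> nat) \<Rightarrow> mtree \<Rightarrow> nat" where
  "parent_rank t R s = (if s = t then 1 else
     R (lab (THE p. p \<in> subtrees t \<and> (\<exists>cs. p = MNode cs \<and> s \<in> set cs))))"

text \<open>Indexing modes
by their labels makes the mode permutations pi_nu implicit.\<close>

definition tidx :: "nat \<Rightarrow> (nat \<Rightarrow> nat) \<Rightarrow> (nat \<Rightarrow> nat) set" where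
  "tidx N D = {i. \<forall>n. (n \<in> {1..N} \<longrightarrow> i n \<in> {1..D n}) \<and> (n \<notin> {1..N} \<longrightarrow> i n = 0)}"

definition is_tensor :: "nat \<Rightarrow> (nat \<Rightarrow> nat) \<Rightarrow> ((nat \<Rightarrow> nat) \<Rightarrow> real) \<Rightarrow> bool" where
  "is_tensor N D T \<longleftrightarrow> (\<forall>i. i \<notin> tidx N D \<longrightarrow> T i = 0)"

definition tnorm :: "nat \<Rightarrow> (nat \<Rightarrow> nat) \<Rightarrow> ((nat \<Rightarrow> nat) \<Rightarrow> real) \<Rightarrow> real" where
  "tnorm N D H = sqrt (\<Sum>i\<in>tidx N D. (H i)\<^sup>2)"

definition tensor_differentiable ::
  "nat \<Rightarrow> (nat \<Rightarrow> nat) \<Rightarrow> (((nat \<Rightarrow> nat) \<Rightarrow> real) \<Rightarrow> real) \<Rightarrow> bool" where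
  "tensor_differentiable N D L \<longleftrightarrow>
     (\<forall>T. is_tensor N D T \<longrightarrow>
        (\<exists>G. \<forall>\<epsilon>>0. \<exists>\<delta>>0. \<forall>H. is_tensor N D H \<longrightarrow> tnorm N D H < \<delta> \<longrightarrow>
            \<bar>L (\<lambda>i. T i + H i) - L T - (\<Sum>i\<in>tidx N D. G i * H i)\<bar> \<le> \<epsilon> * tnorm N D H))"

text \<open>Weights: W nu a b is the entry (a,b) of W^(nu) (1-based).  Intermediate tensor
W^(nu,r) evaluated at the index i (depends only on i restricted to nu).  The tensor product
over children (which have disjoint labels) followed by pi_nu is the pointwise product.\<close>

fun inter_tensor :: "(nat set \<Rightarrow> nat) \<Rightarrow> (nat set \<Rightarrow> nat \<Rightarrow> nat \<Rightarrow> real) \<Rightarrow> mtree \<Rightarrow> nat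
      \<Rightarrow> (nat \<Rightarrow> nat) \<Rightarrow> real" where
  "inter_tensor R W (MLeaf n) r i = W {n} (i n) r"
| "inter_tensor R W (MNode cs) r i =
     (\<Sum>r'=1..R (lab (MNode cs)). W (lab (MNode cs)) r' r *
         prod_list (map (\<lambda>c. inter_tensor R W c r' i) cs))"

definition end_tensor :: "nat \<Rightarrow> (nat \<Rightarrow> nat) \<Rightarrow> mtree \<Rightarrow> (nat set \<Rightarrow> nat)
      \<Rightarrow> (nat set \<Rightarrow> nat \<Rightarrow> nat \<Rightarrow> real) \<Rightarrow> (nat \<Rightarrow> nat) \<Rightarrow> real" where
  "end_tensor N D t R W i = (if i \<in> tidx N D then inter_tensor R W t 1 i else 0)"

definition phi_H :: "nat \<Rightarrow> (nat \<Rightarrow> nat) \<Rightarrow> mtree \<Rightarrow> (nat set \<Rightarrow> nat)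
      \<Rightarrow> (((nat \<Rightarrow> nat) \<Rightarrow> real) \<Rightarrow> real) \<Rightarrow> (nat set \<Rightarrow> nat \<Rightarrow> nat \<Rightarrow> real) \<Rightarrow> real" where
  "phi_H N D t R L W = L (end_tensor N D t R W)"

definition upd_w :: "(nat set \<Rightarrow> nat \<Rightarrow> nat \<Rightarrow> real) \<Rightarrow> nat set \<Rightarrow> nat \<Rightarrow> nat \<Rightarrow> real
      \<Rightarrow> nat set \<Rightarrow> nat \<Rightarrow> nat \<Rightarrow> real" where
  "upd_w W \<nu> a b x = W(\<nu> := (W \<nu>)(a := (W \<nu> a)(b := x)))"

end

theory Submission
  imports Defs
begin

definition wft :: "mtree \<Rightarrow> bool" where
  "wft u \<longleftrightarrow> distinct (leaves u) \<and> (\<forall>v\<in>subtrees u. \<forall>ds. v = MNode ds \<longrightarrow> 2 \<le> length ds)"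

lemma sub_refl: "u \<in> subtrees u"
  by (cases u) auto

lemma sub_trans: "u \<in> subtrees v \<Longrightarrow> v \<in> subtrees w \<Longrightarrow> u \<in> subtrees w"
proof (induction w arbitrary: u v)
  case (MLeaf n) then show ?case by simp
next
  case (MNode ds) then show ?case by auto
qed

lemma sub_child: "MNode ds \<in> subtrees t \<Longrightarrow> d \<in> set ds \<Longrightarrow> d \<in> subtrees t"
  by (rule sub_trans[of _ "MNode ds"]) (auto intro: sub_refl)

lemma lab_leaves: "lab u = set (leaves u)"
  by (induction u) auto

lemma sub_lab: "u \<in> subtrees v \<Longrightarrow> lab u \<subseteq> lab v"
  by (induction v arbitrary: u) auto

lemma child_size: "d \<in> set ds \<Longrightarrow> size d < size (MNode ds)"
  by (induction ds) auto

lemma sub_size: "u \<in> subtrees v \<Longrightarrow> size u \<le> size v"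
proof (induction v arbitrary: u)
  case (MLeaf n) then show ?case by simp
next
  case (MNode ds)
  then show ?case using child_size[of _ ds] by (auto, fastforce)
qed

lemma sub_distinct: "distinct (leaves v) \<Longrightarrow> u \<in> subtrees v \<Longrightarrow> distinct (leaves u)"
proof (induction v arbitrary: u)
  case (MLeaf n) then show ?case by simp
next
  case (MNode ds)
  then show ?case by (auto simp: distinct_concat_iff)
qed

lemma wft_sub: "wft v \<Longrightarrow> u \<in> subtrees v \<Longrightarrow> wft u"
  unfolding wft_def using sub_distinct sub_trans by blast

lemma wft_nonempty: "wft u \<Longrightarrow> leaves u \<noteq> []"
proof (induction u)
  case (MLeaf n) then show ?case by simp
next
  case (MNode ds)
  then have l: "2 \<le> length ds" by (auto simp: wft_def)
  then have "0 < length ds" by linarith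
  then have "ds ! 0 \<in> set ds" by (rule nth_mem)
  moreover have "wft (ds ! 0)" using MNode.prems \<open>ds ! 0 \<in> set ds\<close>
    by (meson sub_child sub_refl wft_sub)
  ultimately have "leaves (ds ! 0) \<noteq> []" using MNode.IH by blast
  then show ?case using \<open>ds ! 0 \<in> set ds\<close> by auto
qed

lemma distinct_concat_idx:
  "distinct (concat xs) \<Longrightarrow> j < length xs \<Longrightarrow> k < length xs \<Longrightarrow> j \<noteq> k
    \<Longrightarrow> set (xs ! j) \<inter> set (xs ! k) = {}"
proof (induction xs arbitrary: j k)
  case Nil then show ?case by simp
next
  case (Cons x xs)
  show ?case
  proof (cases j)
    case 0
    then obtain k' where k': "k = Suc k'" using Cons by (cases k) auto
    then have "k' < length xs" using Cons.prems by simp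
    then have "set (xs ! k') \<subseteq> \<Union> (set ` set xs)" using nth_mem[of k' xs] by blast
    then show ?thesis using Cons.prems 0 k' by auto
  next
    case (Suc j')
    show ?thesis
    proof (cases k)
      case 0
      have "j' < length xs" using Cons.prems Suc by simp
      then have "set (xs ! j') \<subseteq> \<Union> (set ` set xs)" using nth_mem[of j' xs] by blast
      then show ?thesis using Cons.prems 0 Suc by auto
    next
      case (Suc k') then show ?thesis using Cons \<open>j = Suc j'\<close> by auto
    qed
  qed
qed

lemma children_disjoint:
  "distinct (leaves (MNode ds)) \<Longrightarrow> c1 \<in> set ds \<Longrightarrow> c2 \<in> set ds \<Longrightarrow> c1 \<noteq> c2
    \<Longrightarrow> lab c1 \<inter> lab c2 = {}"
proof -
  assume a: "distinct (leaves (MNode ds))" "c1 \<in> set ds" "c2 \<in> set ds" "c1 \<noteq> c2"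
  obtain j where j: "j < length ds" "c1 = ds ! j" using a(2) by (auto simp: in_set_conv_nth)
  obtain k where k: "k < length ds" "c2 = ds ! k" using a(3) by (auto simp: in_set_conv_nth)
  have "j \<noteq> k" using j k a(4) by auto
  then have "set (map leaves ds ! j) \<inter> set (map leaves ds ! k) = {}"
    using distinct_concat_idx[of "map leaves ds" j k] a(1) j k by simp
  then show ?thesis using j k by (simp add: lab_leaves)
qed

lemma laminar:
  "wft v \<Longrightarrow> u \<in> subtrees v \<Longrightarrow> u' \<in> subtrees v
   \<Longrightarrow> u \<in> subtrees u' \<or> u' \<in> subtrees u \<or> lab u \<inter> lab u' = {}"
proof (induction v arbitrary: u u')
  case (MLeaf n) then show ?case by (simp add: sub_refl)
next
  case (MNode ds)
  show ?case
  proof (cases "u = MNode ds \<or> u' = MNode ds")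
    case True then show ?thesis using MNode.prems by auto
  next
    case False
    then obtain c1 c2 where c: "c1 \<in> set ds" "u \<in> subtrees c1" "c2 \<in> set ds" "u' \<in> subtrees c2"
      using MNode.prems by auto
    show ?thesis
    proof (cases "c1 = c2")
      case True
      have "wft c1" using MNode.prems(1) c(1) by (meson sub_child sub_refl wft_sub)
      then show ?thesis using MNode.IH[OF c(1) _ c(2)] c True by blast
    next
      case False
      have "lab c1 \<inter> lab c2 = {}"
        using children_disjoint[OF _ c(1) c(3) False] MNode.prems(1) by (simp add: wft_def)
      then show ?thesis using sub_lab[OF c(2)] sub_lab[OF c(4)] by blast
    qed
  qed
qed

lemma proper_lab:
  assumes "wft w" "u \<in> subtrees w" "u \<noteq> w"
  shows "lab u \<noteq> lab w"
proof (cases w)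
  case (MLeaf n) then show ?thesis using assms by simp
next
  case (MNode ds)
  then obtain d where d: "d \<in> set ds" "u \<in> subtrees d" using assms by auto
  obtain j where j: "j < length ds" "d = ds ! j" using d(1) by (auto simp: in_set_conv_nth)
  have "2 \<le> length ds" using assms(1) MNode by (auto simp: wft_def)
  define k where "k = (if j = 0 then 1 else 0::nat)"
  have k: "k < length ds" "k \<noteq> j" using \<open>2 \<le> length ds\<close> by (auto simp: k_def)
  have dk: "ds ! k \<in> set ds" using k by auto
  have "ds ! k \<noteq> d"
  proof
    assume "ds ! k = d"
    then have "set (map leaves ds ! j) \<inter> set (map leaves ds ! k) = set (leaves d)"
      using j k by simp
    moreover have "set (map leaves ds ! j) \<inter> set (map leaves ds ! k) = {}"
      using distinct_concat_idx[of "map leaves ds" j k] assms(1) MNode j k by (simp add: wft_def)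
    moreover have "wft d" using assms(1) MNode d(1) by (meson sub_child sub_refl wft_sub)
    moreover have "leaves d \<noteq> []" using wft_nonempty \<open>wft d\<close> by blast
    ultimately show False by simp
  qed
  then have disj: "lab (ds ! k) \<inter> lab d = {}"
    using children_disjoint[OF _ dk d(1)] assms(1) MNode by (simp add: wft_def)
  have "wft (ds ! k)" using assms(1) MNode dk by (meson sub_child sub_refl wft_sub)
  then have ne: "lab (ds ! k) \<noteq> {}" using wft_nonempty by (simp add: lab_leaves)
  have "lab (ds ! k) \<subseteq> lab w" using MNode dk by auto
  then show ?thesis using disj ne sub_lab[OF d(2)] by blast
qed

lemma lab_inj:
  assumes "wft v" "u \<in> subtrees v" "u' \<in> subtrees v" "lab u = lab u'"
  shows "u = u'"
proof -
  have wu: "wft u" "wft u'" using assms wft_sub by blast+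
  have "lab u \<noteq> {}" using wu wft_nonempty by (simp add: lab_leaves)
  from laminar[OF assms(1-3)] show ?thesis
  proof (elim disjE)
    assume "u \<in> subtrees u'"
    then show ?thesis using proper_lab[OF wu(2)] assms(4) by metis
  next
    assume "u' \<in> subtrees u"
    then show ?thesis using proper_lab[OF wu(1)] assms(4) by metis
  next
    assume "lab u \<inter> lab u' = {}"
    then show ?thesis using \<open>lab u \<noteq> {}\<close> assms(4) by simp
  qed
qed

lemma parent_uniq1:
  assumes "wft t" "MNode ds1 \<in> subtrees t" "MNode ds2 \<in> subtrees (MNode ds1)"
    "d \<in> set ds1" "d \<in> set ds2"
  shows "ds1 = ds2"
proof (rule ccontr)
  assume ne: "ds1 \<noteq> ds2"
  then obtain c1 where c1: "c1 \<in> set ds1" "MNode ds2 \<in> subtrees c1" using assms(3) by auto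
  have dsub: "d \<in> subtrees c1"
    using sub_trans[OF _ c1(2), of d] assms(5) by (auto intro: sub_refl)
  show False
  proof (cases "d = c1")
    case True
    then show ?thesis using sub_size[OF c1(2)] child_size[OF assms(5)] by simp
  next
    case False
    have w1: "wft (MNode ds1)" using assms wft_sub by blast
    have "lab d \<inter> lab c1 = {}"
      using children_disjoint[OF _ assms(4) c1(1) False] w1 by (simp add: wft_def)
    moreover have "wft d" using w1 assms(4) by (meson sub_child sub_refl wft_sub)
    moreover have "leaves d \<noteq> []" using wft_nonempty \<open>wft d\<close> by blast
    ultimately have "lab d \<inter> lab c1 = {}" "lab d \<noteq> {}" by (auto simp: lab_leaves)
    then show False using sub_lab[OF dsub] by blast
  qed
qed

lemma parent_uniq:
  assumes "wft t" "MNode ds1 \<in> subtrees t" "MNode ds2 \<in> subtrees t"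
    "d \<in> set ds1" "d \<in> set ds2"
  shows "ds1 = ds2"
proof -
  have "wft d" using assms by (meson sub_child wft_sub)
  then have "lab d \<noteq> {}" using wft_nonempty by (simp add: lab_leaves)
  moreover have "lab d \<subseteq> lab (MNode ds1)" "lab d \<subseteq> lab (MNode ds2)" using assms(4,5) by auto
  ultimately have "lab (MNode ds1) \<inter> lab (MNode ds2) \<noteq> {}" by blast
  then have "MNode ds1 \<in> subtrees (MNode ds2) \<or> MNode ds2 \<in> subtrees (MNode ds1)"
    using laminar[OF assms(1-3)] by blast
  then show ?thesis using parent_uniq1 assms by metis
qed

lemma parent_rank_eq:
  assumes "wft t" "MNode ds \<in> subtrees t" "d \<in> set ds"
  shows "parent_rank t R d = R (lab (MNode ds))"
proof -
  have "d \<noteq> t" using sub_size[OF assms(2)] child_size[OF assms(3)] by auto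
  moreover have "(THE p. p \<in> subtrees t \<and> (\<exists>cs. p = MNode cs \<and> d \<in> set cs)) = MNode ds"
    apply (rule the_equality)
    using assms parent_uniq by blast+
  ultimately show ?thesis by (simp add: parent_rank_def)
qed

lemma wft_of_mode: "mode_tree N t \<Longrightarrow> wft t"
  unfolding mode_tree_def wft_def
  using mset_eq_imp_distinct_iff[of "leaves t" "[1..<N+1]"] by auto

lemma leaves_set: "mode_tree N t \<Longrightarrow> set (leaves t) = {1..N}"
  unfolding mode_tree_def by (metis atLeastLessThanSuc_atLeastAtMost Suc_eq_plus1 set_mset_mset set_upt)

lemma col_zero:
  assumes "mode_tree N t" "i \<in> tidx N D" "c \<in> subtrees t"
    "\<forall>a\<in>{1..node_rank D R c}. W (lab c) a r = 0"
  shows "inter_tensor R W c r i = 0"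
proof (cases c)
  case (MLeaf n)
  have "lab c \<subseteq> lab t" using sub_lab[OF assms(3)] .
  then have "n \<in> {1..N}" using leaves_set[OF assms(1)] MLeaf by (simp add: lab_leaves)
  then have "i n \<in> {1..D n}" using assms(2) by (simp add: tidx_def)
  then show ?thesis using assms(4) MLeaf by simp
next
  case (MNode ds)
  then show ?thesis using assms(4) by simp
qed

lemma upd_other: "\<nu>' \<noteq> \<nu> \<Longrightarrow> upd_w W \<nu> a b x \<nu>' = W \<nu>'"
  by (simp add: upd_w_def)

lemma upd_same: "(a', b') \<noteq> (a, b) \<Longrightarrow> upd_w W \<nu> a b x \<nu> a' b' = W \<nu> a' b'"
  by (auto simp: upd_w_def)

lemma part1_inter:
  assumes "wft t" "s = MNode cs" "s \<in> subtrees t" "c \<in> set cs" "inter_tensor R W c r i = 0"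
  shows "u \<in> subtrees t \<Longrightarrow>
    inter_tensor R (upd_w W (lab s) r b x) u rp i = inter_tensor R W u rp i"
proof (induction u arbitrary: rp)
  case (MLeaf n)
  have "MLeaf n \<noteq> s" using assms(2) by simp
  then have "lab (MLeaf n) \<noteq> lab s" using lab_inj[OF assms(1) MLeaf.prems assms(3)] by blast
  then show ?case by (simp add: upd_other)
next
  case (MNode ds)
  have ch: "\<And>d rp'. d \<in> set ds \<Longrightarrow>
      inter_tensor R (upd_w W (lab s) r b x) d rp' i = inter_tensor R W d rp' i"
    using MNode.IH MNode.prems sub_child by blast
  then have meq: "\<And>r'. map (\<lambda>d. inter_tensor R (upd_w W (lab s) r b x) d r' i) ds
      = map (\<lambda>d. inter_tensor R W d r' i) ds" by simp
  show ?case
  proof (cases "MNode ds = s")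
    case True
    then have ds: "ds = cs" using assms(2) by simp
    have z: "prod_list (map (\<lambda>d. inter_tensor R W d r i) cs) = 0"
      using assms(4,5) by (force simp: prod_list_zero_iff)
    show ?thesis
      unfolding inter_tensor.simps meq
    proof (rule sum.cong[OF refl])
      fix r' assume "r' \<in> {1..R (lab (MNode ds))}"
      show "upd_w W (lab s) r b x (lab (MNode ds)) r' rp *
            prod_list (map (\<lambda>d. inter_tensor R W d r' i) ds) =
           W (lab (MNode ds)) r' rp * prod_list (map (\<lambda>d. inter_tensor R W d r' i) ds)"
      proof (cases "r' = r")
        case True then show ?thesis using z ds by simp
      next
        case False then show ?thesis using \<open>MNode ds = s\<close> upd_same[of r' rp r b] by simp
      qed
    qed
  next
    case False
    then have "lab (MNode ds) \<noteq> lab s" using lab_inj[OF assms(1) MNode.prems assms(3)] by blast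
    then show ?thesis unfolding inter_tensor.simps meq by (simp add: upd_other)
  qed
qed

lemma part2_below:
  assumes "wft t" "c \<in> subtrees t"
  shows "v \<in> subtrees c \<Longrightarrow> (v \<noteq> c \<or> r' \<noteq> r) \<Longrightarrow>
    inter_tensor R (upd_w W (lab c) a r x) v r' i = inter_tensor R W v r' i"
proof (induction v arbitrary: r')
  case (MLeaf n)
  have vt: "MLeaf n \<in> subtrees t" using sub_trans[OF MLeaf.prems(1) assms(2)] .
  show ?case
  proof (cases "MLeaf n = c")
    case True
    then have "r' \<noteq> r" using MLeaf.prems by simp
    then show ?thesis using True by (auto simp: upd_w_def)
  next
    case False
    then have "lab (MLeaf n) \<noteq> lab c" using lab_inj[OF assms(1) vt assms(2)] by blast
    then show ?thesis by (simp add: upd_other)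
  qed
next
  case (MNode ds)
  have vt: "MNode ds \<in> subtrees t" using sub_trans[OF MNode.prems(1) assms(2)] .
  have ch: "\<And>d rp'. d \<in> set ds \<Longrightarrow>
      inter_tensor R (upd_w W (lab c) a r x) d rp' i = inter_tensor R W d rp' i"
  proof -
    fix d rp' assume d: "d \<in> set ds"
    have dc: "d \<in> subtrees c" using sub_child[OF MNode.prems(1) d] .
    have "d \<noteq> c" using sub_size[OF MNode.prems(1)] child_size[OF d] by auto
    then show "inter_tensor R (upd_w W (lab c) a r x) d rp' i = inter_tensor R W d rp' i"
      using MNode.IH[OF d dc] by blast
  qed
  then have meq: "\<And>r''. map (\<lambda>d. inter_tensor R (upd_w W (lab c) a r x) d r'' i) ds
      = map (\<lambda>d. inter_tensor R W d r'' i) ds" by simp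
  have top: "\<And>r''. upd_w W (lab c) a r x (lab (MNode ds)) r'' r' = W (lab (MNode ds)) r'' r'"
  proof -
    fix r''
    show "upd_w W (lab c) a r x (lab (MNode ds)) r'' r' = W (lab (MNode ds)) r'' r'"
    proof (cases "MNode ds = c")
      case True
      then have "r' \<noteq> r" using MNode.prems by simp
      then show ?thesis using True upd_same[of r'' r' a r] by simp
    next
      case False
      then have "lab (MNode ds) \<noteq> lab c" using lab_inj[OF assms(1) vt assms(2)] by blast
      then show ?thesis by (simp add: upd_other)
    qed
  qed
  show ?case unfolding inter_tensor.simps meq top ..
qed

lemma part2_main:
  assumes "wft t" "s = MNode cs" "s \<in> subtrees t" "c \<in> set cs"
    "\<forall>b\<in>{1..parent_rank t R s}. W (lab s) r b = 0"
  shows "u \<in> subtrees t \<Longrightarrow> u \<noteq> c \<Longrightarrow> rp \<in> {1..parent_rank t R u} \<Longrightarrow>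
    inter_tensor R (upd_w W (lab c) a r x) u rp i = inter_tensor R W u rp i"
proof (induction u arbitrary: rp)
  have ct: "c \<in> subtrees t" using sub_child assms(2-4) by blast
  {
  case (MLeaf n)
  then have "lab (MLeaf n) \<noteq> lab c" using lab_inj[OF assms(1) MLeaf.prems(1) ct] by blast
  then show ?case by (simp add: upd_other)
  }
next
  have ct: "c \<in> subtrees t" using sub_child assms(2-4) by blast
  case (MNode ds)
  have lne: "lab (MNode ds) \<noteq> lab c" using lab_inj[OF assms(1) MNode.prems(1) ct] MNode.prems(2) by blast
  show ?case
    unfolding inter_tensor.simps upd_other[OF lne]
  proof (rule sum.cong[OF refl])
    fix r' assume r': "r' \<in> {1..R (lab (MNode ds))}"
    show "W (lab (MNode ds)) r' rp *
            prod_list (map (\<lambda>d. inter_tensor R (upd_w W (lab c) a r x) d r' i) ds) =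
          W (lab (MNode ds)) r' rp * prod_list (map (\<lambda>d. inter_tensor R W d r' i) ds)"
    proof (cases "c \<in> set ds \<and> r' = r")
      case True
      then have "ds = cs" using parent_uniq[OF assms(1) MNode.prems(1)] assms(2-4) by blast
      then have "MNode ds = s" using assms(2) by simp
      then have "W (lab (MNode ds)) r' rp = 0" using True MNode.prems(3) assms(5) by simp
      then show ?thesis by simp
    next
      case False
      have meq: "map (\<lambda>d. inter_tensor R (upd_w W (lab c) a r x) d r' i) ds =
            map (\<lambda>d. inter_tensor R W d r' i) ds"
      proof (rule map_cong[OF refl])
        fix d assume d: "d \<in> set ds"
        show "inter_tensor R (upd_w W (lab c) a r x) d r' i = inter_tensor R W d r' i"
        proof (cases "d = c")
          case True
          then have "r' \<noteq> r" using False d by blast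
          then show ?thesis using part2_below[OF assms(1) ct sub_refl[of c]] True by blast
        next
          case False
          have "r' \<in> {1..parent_rank t R d}"
            using parent_rank_eq[OF assms(1) MNode.prems(1) d] r' by simp
          then show ?thesis using MNode.IH[OF d sub_child[OF MNode.prems(1) d] False] by blast
        qed
      qed
      show ?thesis by (simp only: meq)
    qed
  qed
qed

theorem lemma11:
  fixes N :: nat and D :: "nat \<Rightarrow> nat" and t :: mtree and R :: "nat set \<Rightarrow> nat"
    and L :: "((nat \<Rightarrow> nat) \<Rightarrow> real) \<Rightarrow> real"
    and W :: "nat set \<Rightarrow> nat \<Rightarrow> nat \<Rightarrow> real"
    and s c :: mtree and cs :: "mtree list" and r :: nat
  assumes "mode_tree N t"
    and "\<forall>T. is_tensor N D T \<longrightarrow> L T \<ge> 0"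
    and "tensor_differentiable N D L"
    and "s \<in> subtrees t" and "s = MNode cs" and "c \<in> set cs"
    and "r \<in> {1..R (lab s)}"
    and "\<forall>b\<in>{1..parent_rank t R s}. W (lab s) r b = 0"
    and "\<forall>a\<in>{1..node_rank D R c}. W (lab c) a r = 0"
  shows "(\<forall>b\<in>{1..parent_rank t R s}.
            ((\<lambda>x. phi_H N D t R L (upd_w W (lab s) r b x)) has_real_derivative 0)
              (at (W (lab s) r b)))
       \<and> (\<forall>a\<in>{1..node_rank D R c}.
            ((\<lambda>x. phi_H N D t R L (upd_w W (lab c) a r x)) has_real_derivative 0)
              (at (W (lab c) a r)))"
proof -
  have wt: "wft t" using wft_of_mode[OF assms(1)] .
  have ct: "c \<in> subtrees t" using sub_child assms(4-6) by blast
  have tc: "t \<noteq> c" using sub_size[OF assms(4)] child_size[OF assms(6)] assms(5) by auto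
  have e1: "(\<lambda>x. phi_H N D t R L (upd_w W (lab s) r b x)) = (\<lambda>x. phi_H N D t R L W)" for b
  proof -
    have "end_tensor N D t R (upd_w W (lab s) r b x) = end_tensor N D t R W" for x
    proof
      fix i
      show "end_tensor N D t R (upd_w W (lab s) r b x) i = end_tensor N D t R W i"
      proof (cases "i \<in> tidx N D")
        case True
        have z: "inter_tensor R W c r i = 0" using col_zero[of N t i D c R W r] assms(1,9) True ct by blast
        then show ?thesis using part1_inter[OF wt assms(5) assms(4) assms(6) z, where u=t and rp=1 and b=b and x=x]
          by (simp add: end_tensor_def sub_refl)
      qed (simp add: end_tensor_def)
    qed
    then show ?thesis by (simp add: phi_H_def)
  qed
  have e2: "(\<lambda>x. phi_H N D t R L (upd_w W (lab c) a r x)) = (\<lambda>x. phi_H N D t R L W)" for a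
  proof -
    have "end_tensor N D t R (upd_w W (lab c) a r x) = end_tensor N D t R W" for x
    proof
      fix i
      have "inter_tensor R (upd_w W (lab c) a r x) t 1 i = inter_tensor R W t 1 i"
        using part2_main[of t s cs c R W r t 1 a x i] wt assms(4,5,6,8) sub_refl[of t] tc
        by (simp add: parent_rank_def)
      then show "end_tensor N D t R (upd_w W (lab c) a r x) i = end_tensor N D t R W i"
        by (simp add: end_tensor_def)
    qed
    then show ?thesis by (simp add: phi_H_def)
  qed
  show ?thesis unfolding e1 e2 by simp
qed

end
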